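(* For the order-$M$ PARAFAC/CP model with rank $r$ and factor moments $(\mu_k,\sigma_k^2)$ described in the context, the squared mean and pure interaction terms satisfy $(\mathbb E[Y])^2=r^2\prod_{k=1}^M\mu_k^2$, $v_{\{p\}}=r\,\sigma_p^2\prod_{k\ne p}\mu_k^2$ for each $p$, and $v_{\{p,q\}}=r\,\sigma_p^2\sigma_q^2\prod_{k\ne p,q}\mu_k^2$ for all $p\ne q$.
   Context: PARAFAC/CP model of order $M$ and rank $r$: the rate tensor is $\eta_{i_1\dots i_M}=\sum_{s=1}^r\prod_{k=1}^M\theta^{(k)}_{i_k,s}$, where the entries of each factor matrix $\theta^{(k)}\in\mathbb R^{N_k\times r}$ are i.i.d. with mean $\mu_k$ and variance $\sigma_k^2$, independent across $k$. Conditional on $\boldsymbol\eta$, the $Y_{\mathbf i}$ are independent with $\mathbb E[Y_{\mathbf i}\mid\boldsymbol\eta]=\eta_{\mathbf i}$ and $\mathrm{Var}(Y_{\mathbf i}\mid\boldsymbol\eta)=\phi(\eta_{\mathbf i})$ for some positive function $\phi$; $\mathbb E[Y]$ is the common value of $\mathbb E[Y_{\mathbf i}]$. For $S\subseteq\{1,\dots,M\}$, $C_S:=\mathrm{Cov}(Y_{\mathbf i},Y_{\mathbf j})$ for multi-indices with $i_k=j_k$ for $k\in S$ and $i_k\ne j_k$ for $k\notin S$ (this depends only on $S$), with $C_\emptyset=0$; the pure interaction term is $v_S:=\sum_{S'\subseteq S}(-1)^{|S|-|S'|}C_{S'}$. *)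

theory Defs
  imports "HOL-Probability.Probability"
begin

definition cov :: "'a measure \<Rightarrow> ('a \<Rightarrow> real) \<Rightarrow> ('a \<Rightarrow> real) \<Rightarrow> real" where
  "cov P X Z = (\<integral>\<omega>. (X \<omega> - (\<integral>\<omega>'. X \<omega>' \<partial>P)) * (Z \<omega> - (\<integral>\<omega>'. Z \<omega>' \<partial>P)) \<partial>P)"

definition cp_index :: "nat \<Rightarrow> (nat \<Rightarrow> nat) \<Rightarrow> (nat \<Rightarrow> nat) set" where
  "cp_index M N = (\<Pi>\<^sub>E k\<in>{..<M}. {..<N k})"

definition cp_rate :: "nat \<Rightarrow> nat \<Rightarrow> (nat \<Rightarrow> nat \<Rightarrow> nat \<Rightarrow> 'a \<Rightarrow> real) \<Rightarrow> (nat \<Rightarrow> nat) \<Rightarrow> 'a \<Rightarrow> real" where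
  "cp_rate M r \<theta> i \<omega> = (\<Sum>s<r. \<Prod>k<M. \<theta> k (i k) s \<omega>)"

definition cp_eta_sigma :: "'a measure \<Rightarrow> nat \<Rightarrow> (nat \<Rightarrow> nat) \<Rightarrow> nat \<Rightarrow> (nat \<Rightarrow> nat \<Rightarrow> nat \<Rightarrow> 'a \<Rightarrow> real) \<Rightarrow> 'a measure" where
  "cp_eta_sigma P M N r \<theta> =
     sigma (space P) {cp_rate M r \<theta> i -` A \<inter> space P | i A. i \<in> cp_index M N \<and> A \<in> sets borel}"

definition cond_indep_family :: "'a measure \<Rightarrow> 'a measure \<Rightarrow> ('i \<Rightarrow> 'a \<Rightarrow> real) \<Rightarrow> 'i set \<Rightarrow> bool" where
  "cond_indep_family P F Y I \<longleftrightarrow>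
     (\<forall>J A. J \<subseteq> I \<longrightarrow> finite J \<longrightarrow> (\<forall>j\<in>J. A j \<in> sets (borel :: real measure)) \<longrightarrow>
        (AE \<omega> in P. real_cond_exp P F (\<lambda>\<omega>. \<Prod>j\<in>J. indicator (A j) (Y j \<omega>)) \<omega>
                    = (\<Prod>j\<in>J. real_cond_exp P F (\<lambda>\<omega>. indicator (A j) (Y j \<omega>)) \<omega>)))"

definition agree_pattern :: "nat \<Rightarrow> nat set \<Rightarrow> (nat \<Rightarrow> nat) \<Rightarrow> (nat \<Rightarrow> nat) \<Rightarrow> bool" where
  "agree_pattern M S i j \<longleftrightarrow> (\<forall>k<M. (i k = j k \<longleftrightarrow> k \<in> S))"

text \<open>C_S = Cov(Y_i, Y_j) for (some/any) multi-indices with agreement pattern S; C_{} = 0.\<close>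
definition cp_C :: "'a measure \<Rightarrow> nat \<Rightarrow> (nat \<Rightarrow> nat) \<Rightarrow> ((nat \<Rightarrow> nat) \<Rightarrow> 'a \<Rightarrow> real) \<Rightarrow> nat set \<Rightarrow> real" where
  "cp_C P M N Y S =
     (if S = {} then 0 else
       (let ij = (SOME ij. fst ij \<in> cp_index M N \<and> snd ij \<in> cp_index M N \<and> agree_pattern M S (fst ij) (snd ij))
        in cov P (Y (fst ij)) (Y (snd ij))))"

definition cp_v :: "'a measure \<Rightarrow> nat \<Rightarrow> (nat \<Rightarrow> nat) \<Rightarrow> ((nat \<Rightarrow> nat) \<Rightarrow> 'a \<Rightarrow> real) \<Rightarrow> nat set \<Rightarrow> real" where
  "cp_v P M N Y S = (\<Sum>S'\<in>Pow S. (-1) ^ (card S - card S') * cp_C P M N Y S')"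

end

theory Submission
  imports Defs
begin


lemma L2_mult_integrable:
  fixes f g :: "'a \<Rightarrow> real"
  assumes [measurable]: "f \<in> borel_measurable P" "g \<in> borel_measurable P"
    and "integrable P (\<lambda>x. (f x)\<^sup>2)" "integrable P (\<lambda>x. (g x)\<^sup>2)"
  shows "integrable P (\<lambda>x. f x * g x)"
proof (rule Bochner_Integration.integrable_bound[of _ "\<lambda>x. (f x)\<^sup>2 + (g x)\<^sup>2"])
  show "integrable P (\<lambda>x. (f x)\<^sup>2 + (g x)\<^sup>2)" using assms by auto
  show "(\<lambda>x. f x * g x) \<in> borel_measurable P" by measurable
  show "AE x in P. norm (f x * g x) \<le> norm ((f x)\<^sup>2 + (g x)\<^sup>2)"
  proof (rule AE_I2)
    fix x
    have "\<bar>f x * g x\<bar> \<le> (f x)\<^sup>2 + (g x)\<^sup>2"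
    proof -
      have "2 * \<bar>f x\<bar> * \<bar>g x\<bar> \<le> \<bar>f x\<bar>\<^sup>2 + \<bar>g x\<bar>\<^sup>2" by (rule sum_squares_bound)
      moreover have "0 \<le> \<bar>f x\<bar> * \<bar>g x\<bar>" by simp
      ultimately show ?thesis unfolding abs_mult by (simp only: power2_abs)
    qed
    then show "norm (f x * g x) \<le> norm ((f x)\<^sup>2 + (g x)\<^sup>2)" by simp
  qed
qed

lemma indicator_to_id:
  fixes X u v :: "'a \<Rightarrow> real"
  assumes [measurable]: "X \<in> borel_measurable P" "u \<in> borel_measurable P" "v \<in> borel_measurable P"
    and nnu: "AE x in P. 0 \<le> u x" and nnv: "AE x in P. 0 \<le> v x"
    and iu: "integrable P u" and iv: "integrable P v"
    and ixu: "integrable P (\<lambda>x. X x * u x)" and ixv: "integrable P (\<lambda>x. X x * v x)"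
    and eq: "\<And>A. A \<in> sets borel \<Longrightarrow> (\<integral>x. indicator A (X x) * u x \<partial>P) = (\<integral>x. indicator A (X x) * v x \<partial>P)"
  shows "(\<integral>x. X x * u x \<partial>P) = (\<integral>x. X x * v x \<partial>P)"
proof -
  have emeq: "emeasure (distr (density P u) borel X) A = ennreal (\<integral>x. indicator A (X x) * u x \<partial>P)"
    if A: "A \<in> sets borel" and nn: "AE x in P. 0 \<le> u x" and iu: "integrable P u" and [measurable]: "u \<in> borel_measurable P"
    for A and u :: "'a \<Rightarrow> real"
  proof -
    have [measurable]: "A \<in> sets borel" using A .
    have "emeasure (distr (density P u) borel X) A = emeasure (density P u) (X -` A \<inter> space P)"
      by (subst emeasure_distr) auto
    also have "\<dots> = (\<integral>\<^sup>+ x. ennreal (u x) * indicator (X -` A \<inter> space P) x \<partial>P)"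
      by (subst emeasure_density) auto
    also have "\<dots> = (\<integral>\<^sup>+ x. ennreal (indicator A (X x) * u x) \<partial>P)"
      by (rule nn_integral_cong) (auto simp: indicator_def)
    also have "\<dots> = ennreal (\<integral>x. indicator A (X x) * u x \<partial>P)"
    proof (rule nn_integral_eq_integral)
      show "integrable P (\<lambda>x. indicator A (X x) * u x)"
        by (rule Bochner_Integration.integrable_bound[OF iu]) (auto simp: indicator_def)
      show "AE x in P. 0 \<le> indicator A (X x) * u x" using nn by auto
    qed
    finally show ?thesis .
  qed
  have meq: "distr (density P u) borel X = distr (density P v) borel X"
    by (rule measure_eqI) (simp_all add: emeq nnu nnv iu iv eq)
  have "(\<integral>x. X x * u x \<partial>P) = (\<integral>x. x \<partial>distr (density P u) borel X)"
    by (simp add: integral_distr integral_density nnu mult.commute)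
  also have "\<dots> = (\<integral>x. x \<partial>distr (density P v) borel X)" by (simp add: meq)
  also have "\<dots> = (\<integral>x. X x * v x \<partial>P)"
    by (simp add: integral_distr integral_density nnv mult.commute)
  finally show ?thesis .
qed



lemma block_indep_integral:
  assumes P: "prob_space P" and ind: "prob_space.indep_vars P (\<lambda>_. borel) X I"
    and fin: "finite L" and K: "\<And>j. j \<in> L \<Longrightarrow> K j \<subseteq> I" and disj: "disjoint_family_on K L"
    and g: "\<And>j. j \<in> L \<Longrightarrow> g j \<in> borel_measurable (PiM (K j) (\<lambda>_. borel))"
    and int: "\<And>j. j \<in> L \<Longrightarrow> integrable P (\<lambda>\<omega>. g j (restrict (\<lambda>i. X i \<omega>) (K j)) :: real)"
  shows "(\<integral>\<omega>. (\<Prod>j\<in>L. g j (restrict (\<lambda>i. X i \<omega>) (K j))) \<partial>P)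
          = (\<Prod>j\<in>L. \<integral>\<omega>. g j (restrict (\<lambda>i. X i \<omega>) (K j)) \<partial>P)"
    and "integrable P (\<lambda>\<omega>. \<Prod>j\<in>L. g j (restrict (\<lambda>i. X i \<omega>) (K j)))"
proof -
  interpret prob_space P by fact
  have i2: "indep_vars (\<lambda>_. borel) (\<lambda>j \<omega>. g j (restrict (\<lambda>i. X i \<omega>) (K j))) L"
    using indep_vars_compose2[OF indep_vars_restrict[OF ind K disj] g] by simp
  show "(\<integral>\<omega>. (\<Prod>j\<in>L. g j (restrict (\<lambda>i. X i \<omega>) (K j))) \<partial>P)
          = (\<Prod>j\<in>L. \<integral>\<omega>. g j (restrict (\<lambda>i. X i \<omega>) (K j)) \<partial>P)"
    using indep_vars_lebesgue_integral[OF fin i2 int] by simp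
  show "integrable P (\<lambda>\<omega>. \<Prod>j\<in>L. g j (restrict (\<lambda>i. X i \<omega>) (K j)))"
    using indep_vars_integrable[OF fin i2 int] by simp
qed

locale cpth = prob_space Pr for Pr :: "'a measure" +
  fixes M r :: nat and N :: "nat \<Rightarrow> nat"
    and \<theta> :: "nat \<Rightarrow> nat \<Rightarrow> nat \<Rightarrow> 'a \<Rightarrow> real"
    and \<mu> \<sigma> :: "nat \<Rightarrow> real"
  assumes theta_rv: "\<And>k i s. k < M \<Longrightarrow> i < N k \<Longrightarrow> s < r \<Longrightarrow> \<theta> k i s \<in> borel_measurable Pr"
    and theta_indep: "indep_vars (\<lambda>_. borel) (\<lambda>(k, i, s). \<theta> k i s)
                        {(k, i, s). k < M \<and> i < N k \<and> s < r}"
    and theta_L2: "\<And>k i s. k < M \<Longrightarrow> i < N k \<Longrightarrow> s < r \<Longrightarrow> integrable Pr (\<lambda>\<omega>. (\<theta> k i s \<omega>)\<^sup>2)"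
    and theta_mean: "\<And>k i s. k < M \<Longrightarrow> i < N k \<Longrightarrow> s < r \<Longrightarrow> expectation (\<theta> k i s) = \<mu> k"
    and theta_var: "\<And>k i s. k < M \<Longrightarrow> i < N k \<Longrightarrow> s < r \<Longrightarrow> variance (\<theta> k i s) = (\<sigma> k)\<^sup>2"
begin

lemma theta_int: "k < M \<Longrightarrow> i < N k \<Longrightarrow> s < r \<Longrightarrow> integrable Pr (\<theta> k i s)"
  using square_integrable_imp_integrable[OF theta_rv theta_L2] by auto

lemma theta_sq: "k < M \<Longrightarrow> i < N k \<Longrightarrow> s < r \<Longrightarrow> expectation (\<lambda>\<omega>. (\<theta> k i s \<omega>)\<^sup>2) = (\<sigma> k)\<^sup>2 + (\<mu> k)\<^sup>2"
  using variance_eq[OF theta_int theta_L2] theta_var theta_mean by force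

lemma theta_pair:
  assumes k: "k < M" "i < N k" "s < r" "i' < N k" "s' < r"
  shows "integrable Pr (\<lambda>\<omega>. \<theta> k i s \<omega> * \<theta> k i' s' \<omega>)"
    and "expectation (\<lambda>\<omega>. \<theta> k i s \<omega> * \<theta> k i' s' \<omega>)
          = (if i = i' \<and> s = s' then (\<sigma> k)\<^sup>2 + (\<mu> k)\<^sup>2 else (\<mu> k)\<^sup>2)"
proof -
  show "integrable Pr (\<lambda>\<omega>. \<theta> k i s \<omega> * \<theta> k i' s' \<omega>)"
  proof (cases "i = i' \<and> s = s'")
    case True then show ?thesis using theta_L2[OF k(1-3)] by (simp add: power2_eq_square)
  next
    case False
    let ?X = "\<lambda>(k, i, s). \<theta> k i s"
    have ind: "indep_vars (\<lambda>_. borel) ?X {(k,i,s),(k,i',s')}"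
      by (rule indep_vars_subset[OF theta_indep]) (use k in auto)
    have "integrable Pr (\<lambda>\<omega>. \<Prod>t\<in>{(k,i,s),(k,i',s')}. ?X t \<omega>)"
      by (rule indep_vars_integrable[OF _ ind]) (use k theta_int in auto)
    then show ?thesis using False by simp
  qed
  show "expectation (\<lambda>\<omega>. \<theta> k i s \<omega> * \<theta> k i' s' \<omega>)
          = (if i = i' \<and> s = s' then (\<sigma> k)\<^sup>2 + (\<mu> k)\<^sup>2 else (\<mu> k)\<^sup>2)"
  proof (cases "i = i' \<and> s = s'")
    case True then show ?thesis using theta_sq[OF k(1-3)] by (simp add: power2_eq_square)
  next
    case False
    let ?X = "\<lambda>(k, i, s). \<theta> k i s"
    have ind: "indep_vars (\<lambda>_. borel) ?X {(k,i,s),(k,i',s')}"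
      by (rule indep_vars_subset[OF theta_indep]) (use k in auto)
    have "expectation (\<lambda>\<omega>. \<Prod>t\<in>{(k,i,s),(k,i',s')}. ?X t \<omega>) = (\<Prod>t\<in>{(k,i,s),(k,i',s')}. expectation (?X t))"
      by (rule indep_vars_lebesgue_integral[OF _ ind]) (use k theta_int in auto)
    then show ?thesis using False k theta_mean by (auto simp: power2_eq_square)
  qed
qed

lemma prod_moment:
  assumes i: "\<And>k. k < M \<Longrightarrow> i k < N k" and j: "\<And>k. k < M \<Longrightarrow> j k < N k" and s: "s < r" "s' < r"
  shows "integrable Pr (\<lambda>\<omega>. \<Prod>k<M. \<theta> k (i k) s \<omega> * \<theta> k (j k) s' \<omega>)"
    and "expectation (\<lambda>\<omega>. \<Prod>k<M. \<theta> k (i k) s \<omega> * \<theta> k (j k) s' \<omega>)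
          = (\<Prod>k<M. if i k = j k \<and> s = s' then (\<sigma> k)\<^sup>2 + (\<mu> k)\<^sup>2 else (\<mu> k)\<^sup>2)"
proof -
  let ?X = "\<lambda>(k, i, s). \<theta> k i s"
  let ?K = "\<lambda>k. {(k, i k, s), (k, j k, s')}"
  let ?g = "\<lambda>k f. f (k, i k, s) * f (k, j k, s') :: real"
  have K: "?K k \<subseteq> {(k, i, s). k < M \<and> i < N k \<and> s < r}" if "k \<in> {..<M}" for k
    using that i j s by auto
  have disj: "disjoint_family_on ?K {..<M}" by (auto simp: disjoint_family_on_def)
  have g: "?g k \<in> borel_measurable (PiM (?K k) (\<lambda>_. borel))" for k
    by (intro borel_measurable_times measurable_component_singleton) auto
  have ev: "?g k (restrict (\<lambda>t. ?X t \<omega>) (?K k)) = \<theta> k (i k) s \<omega> * \<theta> k (j k) s' \<omega>" for k \<omega>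
    by simp
  have int: "integrable Pr (\<lambda>\<omega>. ?g k (restrict (\<lambda>t. ?X t \<omega>) (?K k)))" if "k \<in> {..<M}" for k
    unfolding ev using theta_pair(1)[of k "i k" s "j k" s'] that i j s by auto
  note B = block_indep_integral[OF prob_space_axioms theta_indep finite_lessThan K disj g int]
  show "integrable Pr (\<lambda>\<omega>. \<Prod>k<M. \<theta> k (i k) s \<omega> * \<theta> k (j k) s' \<omega>)"
    using B(2) unfolding ev .
  show "expectation (\<lambda>\<omega>. \<Prod>k<M. \<theta> k (i k) s \<omega> * \<theta> k (j k) s' \<omega>)
          = (\<Prod>k<M. if i k = j k \<and> s = s' then (\<sigma> k)\<^sup>2 + (\<mu> k)\<^sup>2 else (\<mu> k)\<^sup>2)"
    using B(1) unfolding ev using theta_pair(2) i j s by (auto intro!: prod.cong)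
qed

lemma single_moment:
  assumes i: "\<And>k. k < M \<Longrightarrow> i k < N k" and s: "s < r"
  shows "integrable Pr (\<lambda>\<omega>. \<Prod>k<M. \<theta> k (i k) s \<omega>)"
    and "expectation (\<lambda>\<omega>. \<Prod>k<M. \<theta> k (i k) s \<omega>) = (\<Prod>k<M. \<mu> k)"
proof -
  let ?X = "\<lambda>(k, i, s). \<theta> k i s"
  let ?K = "\<lambda>k. {(k, i k, s)}"
  let ?g = "\<lambda>k f. f (k, i k, s) :: real"
  have K: "?K k \<subseteq> {(k, i, s). k < M \<and> i < N k \<and> s < r}" if "k \<in> {..<M}" for k
    using that i s by auto
  have disj: "disjoint_family_on ?K {..<M}" by (auto simp: disjoint_family_on_def)
  have g: "?g k \<in> borel_measurable (PiM (?K k) (\<lambda>_. borel))" for k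
    by (intro measurable_component_singleton) auto
  have ev: "?g k (restrict (\<lambda>t. ?X t \<omega>) (?K k)) = \<theta> k (i k) s \<omega>" for k \<omega>
    by simp
  have int: "integrable Pr (\<lambda>\<omega>. ?g k (restrict (\<lambda>t. ?X t \<omega>) (?K k)))" if "k \<in> {..<M}" for k
    unfolding ev using theta_int that i s by auto
  note B = block_indep_integral[OF prob_space_axioms theta_indep finite_lessThan K disj g int]
  show "integrable Pr (\<lambda>\<omega>. \<Prod>k<M. \<theta> k (i k) s \<omega>)"
    using B(2) unfolding ev .
  show "expectation (\<lambda>\<omega>. \<Prod>k<M. \<theta> k (i k) s \<omega>) = (\<Prod>k<M. \<mu> k)"
    using B(1) unfolding ev using theta_mean i s by (auto intro!: prod.cong)
qed

end


context cpth begin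

lemma cp_rate_eq: "cp_rate M r \<theta> i = (\<lambda>\<omega>. \<Sum>s<r. \<Prod>k<M. \<theta> k (i k) s \<omega>)"
  by (simp add: cp_rate_def fun_eq_iff)

lemma eta_meas:
  assumes i: "\<And>k. k < M \<Longrightarrow> i k < N k"
  shows "cp_rate M r \<theta> i \<in> borel_measurable Pr"
  unfolding cp_rate_eq by (intro borel_measurable_sum borel_measurable_prod theta_rv) (auto simp: i)

lemma eta_mean:
  assumes i: "\<And>k. k < M \<Longrightarrow> i k < N k"
  shows "integrable Pr (cp_rate M r \<theta> i)"
    and "expectation (cp_rate M r \<theta> i) = real r * (\<Prod>k<M. \<mu> k)"
proof -
  show "integrable Pr (cp_rate M r \<theta> i)"
    unfolding cp_rate_eq by (intro Bochner_Integration.integrable_sum single_moment(1)[OF i]) auto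
  have "expectation (cp_rate M r \<theta> i) = (\<Sum>s<r. expectation (\<lambda>\<omega>. \<Prod>k<M. \<theta> k (i k) s \<omega>))"
    unfolding cp_rate_eq by (intro Bochner_Integration.integral_sum single_moment(1)[OF i]) auto
  also have "\<dots> = (\<Sum>s<r. \<Prod>k<M. \<mu> k)"
    by (intro sum.cong refl single_moment(2)[OF i]) auto
  finally show "expectation (cp_rate M r \<theta> i) = real r * (\<Prod>k<M. \<mu> k)" by simp
qed

lemma eta_prod:
  assumes i: "\<And>k. k < M \<Longrightarrow> i k < N k" and j: "\<And>k. k < M \<Longrightarrow> j k < N k"
  shows "integrable Pr (\<lambda>\<omega>. cp_rate M r \<theta> i \<omega> * cp_rate M r \<theta> j \<omega>)"
    and "expectation (\<lambda>\<omega>. cp_rate M r \<theta> i \<omega> * cp_rate M r \<theta> j \<omega>)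
         = real r * (real r * (\<Prod>k<M. (\<mu> k)\<^sup>2)
             + (\<Prod>k<M. if i k = j k then (\<sigma> k)\<^sup>2 + (\<mu> k)\<^sup>2 else (\<mu> k)\<^sup>2) - (\<Prod>k<M. (\<mu> k)\<^sup>2))"
proof -
  define A where "A = (\<Prod>k<M. if i k = j k then (\<sigma> k)\<^sup>2 + (\<mu> k)\<^sup>2 else (\<mu> k)\<^sup>2)"
  define B where "B = (\<Prod>k<M. (\<mu> k)\<^sup>2)"
  have eq: "(\<lambda>\<omega>. cp_rate M r \<theta> i \<omega> * cp_rate M r \<theta> j \<omega>)
      = (\<lambda>\<omega>. \<Sum>s<r. \<Sum>s'<r. \<Prod>k<M. \<theta> k (i k) s \<omega> * \<theta> k (j k) s' \<omega>)"
    by (simp add: cp_rate_eq sum_product prod.distrib)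
  show "integrable Pr (\<lambda>\<omega>. cp_rate M r \<theta> i \<omega> * cp_rate M r \<theta> j \<omega>)"
    unfolding eq by (intro Bochner_Integration.integrable_sum prod_moment(1)[OF i j]) auto
  have C: "(\<Prod>k<M. if i k = j k \<and> s = s' then (\<sigma> k)\<^sup>2 + (\<mu> k)\<^sup>2 else (\<mu> k)\<^sup>2)
           = (if s = s' then A else B)" for s s' :: nat
    by (cases "s = s'") (simp_all add: A_def B_def)
  have inner: "(\<Sum>s'<r. (if s = s' then A else B)) = real r * B + (A - B)" if "s < r" for s
  proof -
    have "(\<Sum>s'<r. (if s = s' then A else B)) = (\<Sum>s'<r. B + (if s = s' then A - B else 0))"
      by (intro sum.cong) auto
    also have "\<dots> = real r * B + (A - B)" using that by (simp add: sum.distrib)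
    finally show ?thesis .
  qed
  have "expectation (\<lambda>\<omega>. cp_rate M r \<theta> i \<omega> * cp_rate M r \<theta> j \<omega>)
      = (\<Sum>s<r. \<Sum>s'<r. expectation (\<lambda>\<omega>. \<Prod>k<M. \<theta> k (i k) s \<omega> * \<theta> k (j k) s' \<omega>))"
    unfolding eq
  proof -
    have "expectation (\<lambda>\<omega>. \<Sum>s<r. \<Sum>s'<r. \<Prod>k<M. \<theta> k (i k) s \<omega> * \<theta> k (j k) s' \<omega>)
        = (\<Sum>s<r. expectation (\<lambda>\<omega>. \<Sum>s'<r. \<Prod>k<M. \<theta> k (i k) s \<omega> * \<theta> k (j k) s' \<omega>))"
      by (intro Bochner_Integration.integral_sum Bochner_Integration.integrable_sum prod_moment(1)[OF i j]) auto
    also have "\<dots> = (\<Sum>s<r. \<Sum>s'<r. expectation (\<lambda>\<omega>. \<Prod>k<M. \<theta> k (i k) s \<omega> * \<theta> k (j k) s' \<omega>))"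
      by (intro sum.cong refl Bochner_Integration.integral_sum prod_moment(1)[OF i j]) auto
    finally show "expectation (\<lambda>\<omega>. \<Sum>s<r. \<Sum>s'<r. \<Prod>k<M. \<theta> k (i k) s \<omega> * \<theta> k (j k) s' \<omega>)
        = (\<Sum>s<r. \<Sum>s'<r. expectation (\<lambda>\<omega>. \<Prod>k<M. \<theta> k (i k) s \<omega> * \<theta> k (j k) s' \<omega>))" .
  qed
  also have "\<dots> = (\<Sum>s<r. \<Sum>s'<r. (if s = s' then A else B))"
    by (intro sum.cong refl) (simp add: prod_moment(2)[OF i j] C)
  also have "\<dots> = (\<Sum>s<r. real r * B + (A - B))"
    by (intro sum.cong refl inner) auto
  also have "\<dots> = real r * (real r * B + A - B)" by simp
  finally show "expectation (\<lambda>\<omega>. cp_rate M r \<theta> i \<omega> * cp_rate M r \<theta> j \<omega>)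
         = real r * (real r * (\<Prod>k<M. (\<mu> k)\<^sup>2)
             + (\<Prod>k<M. if i k = j k then (\<sigma> k)\<^sup>2 + (\<mu> k)\<^sup>2 else (\<mu> k)\<^sup>2) - (\<Prod>k<M. (\<mu> k)\<^sup>2))"
    by (simp add: A_def B_def)
qed

end


locale cpm = cpth +
  fixes Y :: "(nat \<Rightarrow> nat) \<Rightarrow> 'a \<Rightarrow> real"
  assumes Y_rv: "\<And>i. i \<in> cp_index M N \<Longrightarrow> Y i \<in> borel_measurable Pr"
    and Y_L2: "\<And>i. i \<in> cp_index M N \<Longrightarrow> integrable Pr (\<lambda>\<omega>. (Y i \<omega>)\<^sup>2)"
    and Y_cond_indep: "cond_indep_family Pr (cp_eta_sigma Pr M N r \<theta>) Y (cp_index M N)"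
    and Y_cond_mean: "\<And>i. i \<in> cp_index M N \<Longrightarrow>
          AE \<omega> in Pr. real_cond_exp Pr (cp_eta_sigma Pr M N r \<theta>) (Y i) \<omega> = cp_rate M r \<theta> i \<omega>"
begin

abbreviation "F \<equiv> cp_eta_sigma Pr M N r \<theta>"
abbreviation "G \<equiv> {cp_rate M r \<theta> i -` A \<inter> space Pr | i A. i \<in> cp_index M N \<and> A \<in> sets borel}"

lemma idx: "i \<in> cp_index M N \<Longrightarrow> k < M \<Longrightarrow> i k < N k"
  by (auto simp: cp_index_def PiE_iff)

lemma G_sub: "G \<subseteq> sets Pr"
  using eta_meas idx measurable_sets by blast

lemma space_F: "space F = space Pr"
  unfolding cp_eta_sigma_def by (rule space_measure_of) auto

lemma sets_F: "sets F = sigma_sets (space Pr) G"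
  unfolding cp_eta_sigma_def by (rule sets_measure_of) auto

lemma subalg: "subalgebra Pr F"
  unfolding subalgebra_def using space_F sets_F sets.sigma_sets_subset[OF G_sub] by auto

lemma sfs: "sigma_finite_subalgebra Pr F"
proof (rule finite_measure_subalgebra_is_sigma_finite)
  have "finite_measure Pr" using prob_space_axioms by (simp add: prob_space_def)
  then show "finite_measure_subalgebra Pr F"
    by (simp add: finite_measure_subalgebra_def finite_measure_subalgebra_axioms_def subalg)
qed

lemma eta_F: assumes i: "i \<in> cp_index M N" shows "cp_rate M r \<theta> i \<in> borel_measurable F"
proof (rule measurableI)
  fix A :: "real set" assume "A \<in> sets borel"
  then have "cp_rate M r \<theta> i -` A \<inter> space Pr \<in> G" using i by blast
  then show "cp_rate M r \<theta> i -` A \<inter> space F \<in> sets F"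
    unfolding sets_F space_F by (rule sigma_sets.Basic)
qed simp

lemma eta_rv: "i \<in> cp_index M N \<Longrightarrow> cp_rate M r \<theta> i \<in> borel_measurable Pr"
  using eta_meas idx by blast

lemma eta_int: "i \<in> cp_index M N \<Longrightarrow> integrable Pr (cp_rate M r \<theta> i)"
  using eta_mean(1) idx by blast

lemma eta_L2: "i \<in> cp_index M N \<Longrightarrow> integrable Pr (\<lambda>\<omega>. (cp_rate M r \<theta> i \<omega>)\<^sup>2)"
  using eta_prod(1)[of i i] idx by (simp add: power2_eq_square)

lemma Y_int: "i \<in> cp_index M N \<Longrightarrow> integrable Pr (Y i)"
  using square_integrable_imp_integrable[OF Y_rv Y_L2] by blast

lemma EY: assumes i: "i \<in> cp_index M N"
  shows "expectation (Y i) = expectation (cp_rate M r \<theta> i)"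
proof -
  have "expectation (Y i) = expectation (real_cond_exp Pr F (Y i))"
    using sigma_finite_subalgebra.real_cond_exp_int(2)[OF sfs Y_int[OF i]] by simp
  also have "\<dots> = expectation (cp_rate M r \<theta> i)"
    by (rule integral_cong_AE) (use Y_cond_mean[OF i] eta_rv[OF i] in auto)
  finally show ?thesis .
qed

end


context cpm begin

lemma ce_ind_bounds:
  assumes [measurable]: "Z \<in> borel_measurable Pr" and B[measurable]: "B \<in> sets borel"
  shows "AE \<omega> in Pr. 0 \<le> real_cond_exp Pr F (\<lambda>\<omega>. indicator B (Z \<omega>)) \<omega>
                    \<and> real_cond_exp Pr F (\<lambda>\<omega>. indicator B (Z \<omega>)) \<omega> \<le> 1"
proof -
  have int: "integrable Pr (\<lambda>\<omega>. indicator B (Z \<omega>) :: real)"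
    by (rule integrable_const_bound[where B=1]) auto
  have "AE \<omega> in Pr. 0 \<le> real_cond_exp Pr F (\<lambda>\<omega>. indicator B (Z \<omega>)) \<omega>"
    by (rule sigma_finite_subalgebra.real_cond_exp_ge_c[OF sfs int]) auto
  moreover have "AE \<omega> in Pr. real_cond_exp Pr F (\<lambda>\<omega>. indicator B (Z \<omega>)) \<omega> \<le> 1"
    by (rule sigma_finite_subalgebra.real_cond_exp_le_c[OF sfs int]) (auto simp: indicator_def)
  ultimately show ?thesis by auto
qed

lemma step_B:
  assumes i: "i \<in> cp_index M N" and j: "j \<in> cp_index M N" and ij: "i \<noteq> j"
    and B[measurable]: "B \<in> sets borel"
  shows "(\<integral>\<omega>. indicator B (Y j \<omega>) * Y i \<omega> \<partial>Pr) = (\<integral>\<omega>. indicator B (Y j \<omega>) * cp_rate M r \<theta> i \<omega> \<partial>Pr)"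
proof -
  have [measurable]: "Y i \<in> borel_measurable Pr" "Y j \<in> borel_measurable Pr"
    "cp_rate M r \<theta> i \<in> borel_measurable Pr" using Y_rv i j eta_rv by auto
  have etaF[measurable]: "cp_rate M r \<theta> i \<in> borel_measurable F" using eta_F i .
  let ?hB = "\<lambda>\<omega>. indicator B (Y j \<omega>) :: real"
  let ?cB = "real_cond_exp Pr F ?hB"
  have bnd: "AE \<omega> in Pr. 0 \<le> ?cB \<omega> \<and> ?cB \<omega> \<le> 1" by (rule ce_ind_bounds) auto
  have cB_abs: "AE \<omega> in Pr. \<bar>?cB \<omega>\<bar> \<le> 1" using bnd by auto
  have int_hB: "integrable Pr ?hB" by (rule integrable_const_bound[where B=1]) auto
  have int_cB: "integrable Pr ?cB" by (rule integrable_const_bound[where B=1]) (use cB_abs in auto)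
  have mul_int: "integrable Pr (\<lambda>\<omega>. f \<omega> * g \<omega>)"
    if "integrable Pr f" "g \<in> borel_measurable Pr" "AE \<omega> in Pr. \<bar>g \<omega>\<bar> \<le> 1"
       "f \<in> borel_measurable Pr" for f g :: "'a \<Rightarrow> real"
  proof (rule Bochner_Integration.integrable_bound[OF that(1)])
    show "(\<lambda>\<omega>. f \<omega> * g \<omega>) \<in> borel_measurable Pr" using that by measurable
    show "AE x in Pr. norm (f x * g x) \<le> norm (f x)"
      using that(3) by eventually_elim (auto simp: abs_mult intro: mult_left_le)
  qed
  have hB_abs: "AE \<omega> in Pr. \<bar>?hB \<omega>\<bar> \<le> 1" by auto
  have eqA: "(\<integral>\<omega>. indicator A (Y i \<omega>) * ?hB \<omega> \<partial>Pr) = (\<integral>\<omega>. indicator A (Y i \<omega>) * ?cB \<omega> \<partial>Pr)"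
    if A[measurable]: "A \<in> sets borel" for A
  proof -
    let ?hA = "\<lambda>\<omega>. indicator A (Y i \<omega>) :: real"
    let ?cA = "real_cond_exp Pr F ?hA"
    have int_hA: "integrable Pr ?hA" by (rule integrable_const_bound[where B=1]) auto
    have int_AB: "integrable Pr (\<lambda>\<omega>. ?hA \<omega> * ?hB \<omega>)"
      by (rule integrable_const_bound[where B=1]) (auto simp: indicator_def)
    have ci: "AE \<omega> in Pr. real_cond_exp Pr F (\<lambda>\<omega>. \<Prod>x\<in>{i,j}. indicator ((\<lambda>x. if x = i then A else B) x) (Y x \<omega>)) \<omega>
              = (\<Prod>x\<in>{i,j}. real_cond_exp Pr F (\<lambda>\<omega>. indicator ((\<lambda>x. if x = i then A else B) x) (Y x \<omega>)) \<omega>)"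
      using Y_cond_indep unfolding cond_indep_family_def
      by (elim allE[of _ "{i,j}"] allE[of _ "\<lambda>x. if x = i then A else B"]) (use i j in auto)
    then have ci': "AE \<omega> in Pr. real_cond_exp Pr F (\<lambda>\<omega>. ?hA \<omega> * ?hB \<omega>) \<omega> = ?cA \<omega> * ?cB \<omega>"
      using ij by simp
    have "(\<integral>\<omega>. ?hA \<omega> * ?hB \<omega> \<partial>Pr) = (\<integral>\<omega>. real_cond_exp Pr F (\<lambda>\<omega>. ?hA \<omega> * ?hB \<omega>) \<omega> \<partial>Pr)"
      using sigma_finite_subalgebra.real_cond_exp_int(2)[OF sfs int_AB] by simp
    also have "\<dots> = (\<integral>\<omega>. ?cB \<omega> * ?cA \<omega> \<partial>Pr)"
      by (rule integral_cong_AE) (use ci' in auto)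
    also have "\<dots> = (\<integral>\<omega>. ?cB \<omega> * ?hA \<omega> \<partial>Pr)"
    proof -
      have "integrable Pr (\<lambda>\<omega>. ?cB \<omega> * ?hA \<omega>)"
        by (rule mul_int[OF int_cB]) auto
      then show ?thesis
        by (rule sigma_finite_subalgebra.real_cond_exp_intg(2)[OF sfs]) auto
    qed
    finally show ?thesis by (simp add: mult.commute)
  qed
  have s3: "(\<integral>\<omega>. Y i \<omega> * ?hB \<omega> \<partial>Pr) = (\<integral>\<omega>. Y i \<omega> * ?cB \<omega> \<partial>Pr)"
  proof (rule indicator_to_id)
    show "AE x in Pr. 0 \<le> ?hB x" by auto
    show "AE x in Pr. 0 \<le> ?cB x" using bnd by auto
    show "integrable Pr ?hB" by (rule int_hB)
    show "integrable Pr ?cB" by (rule int_cB)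
    show "integrable Pr (\<lambda>x. Y i x * ?hB x)" by (rule mul_int) (use Y_int[OF i] hB_abs in auto)
    show "integrable Pr (\<lambda>x. Y i x * ?cB x)" by (rule mul_int) (use Y_int[OF i] cB_abs in auto)
  qed (auto simp: eqA)
  have s4: "(\<integral>\<omega>. ?cB \<omega> * real_cond_exp Pr F (Y i) \<omega> \<partial>Pr) = (\<integral>\<omega>. ?cB \<omega> * Y i \<omega> \<partial>Pr)"
    by (rule sigma_finite_subalgebra.real_cond_exp_intg(2)[OF sfs])
       (auto intro!: mul_int Y_int[OF i] cB_abs simp: mult.commute[of "?cB _"])
  have s4': "(\<integral>\<omega>. ?cB \<omega> * real_cond_exp Pr F (Y i) \<omega> \<partial>Pr) = (\<integral>\<omega>. ?cB \<omega> * cp_rate M r \<theta> i \<omega> \<partial>Pr)"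
    by (rule integral_cong_AE) (use Y_cond_mean[OF i] in auto)
  have s5: "(\<integral>\<omega>. cp_rate M r \<theta> i \<omega> * ?cB \<omega> \<partial>Pr) = (\<integral>\<omega>. cp_rate M r \<theta> i \<omega> * ?hB \<omega> \<partial>Pr)"
    by (rule sigma_finite_subalgebra.real_cond_exp_intg(2)[OF sfs])
       (auto intro!: mul_int eta_int[OF i])
  show ?thesis using s3 s4 s4' s5 by (simp add: mult.commute)
qed

end


context cpm begin

lemma EYY:
  assumes i: "i \<in> cp_index M N" and j: "j \<in> cp_index M N" and ij: "i \<noteq> j"
  shows "expectation (\<lambda>\<omega>. Y i \<omega> * Y j \<omega>) = expectation (\<lambda>\<omega>. cp_rate M r \<theta> i \<omega> * cp_rate M r \<theta> j \<omega>)"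
proof -
  have [measurable]: "Y i \<in> borel_measurable Pr" "Y j \<in> borel_measurable Pr"
    "cp_rate M r \<theta> i \<in> borel_measurable Pr" using Y_rv i j eta_rv by auto
  let ?e = "cp_rate M r \<theta> i"
  let ?u = "\<lambda>\<omega>. max (Y i \<omega>) 0 + max (- ?e \<omega>) 0"
  let ?v = "\<lambda>\<omega>. max (?e \<omega>) 0 + max (- Y i \<omega>) 0"
  have uv: "?u \<omega> - ?v \<omega> = Y i \<omega> - ?e \<omega>" for \<omega> by (simp add: max_def)
  have iYi: "integrable Pr (Y i)" and iYj: "integrable Pr (Y j)" and ie: "integrable Pr ?e"
    using Y_int i j eta_int by auto
  have iu: "integrable Pr ?u" using iYi ie by auto
  have iv: "integrable Pr ?v" using iYi ie by auto
  have iYY: "integrable Pr (\<lambda>\<omega>. Y j \<omega> * Y i \<omega>)"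
    by (rule L2_mult_integrable) (use Y_L2 i j in auto)
  have iYe: "integrable Pr (\<lambda>\<omega>. Y j \<omega> * ?e \<omega>)"
    by (rule L2_mult_integrable) (use Y_L2 eta_L2 i j in auto)
  have bound_int: "integrable Pr (\<lambda>\<omega>. Y j \<omega> * (max (f \<omega>) 0 + max (- g \<omega>) 0))"
    if "integrable Pr (\<lambda>\<omega>. Y j \<omega> * f \<omega>)" "integrable Pr (\<lambda>\<omega>. Y j \<omega> * g \<omega>)"
       "f \<in> borel_measurable Pr" "g \<in> borel_measurable Pr" for f g
  proof (rule Bochner_Integration.integrable_bound[of _ "\<lambda>\<omega>. \<bar>Y j \<omega> * f \<omega>\<bar> + \<bar>Y j \<omega> * g \<omega>\<bar>"])
    show "integrable Pr (\<lambda>\<omega>. \<bar>Y j \<omega> * f \<omega>\<bar> + \<bar>Y j \<omega> * g \<omega>\<bar>)" using that by auto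
    show "(\<lambda>\<omega>. Y j \<omega> * (max (f \<omega>) 0 + max (- g \<omega>) 0)) \<in> borel_measurable Pr" using that by measurable
    show "AE x in Pr. norm (Y j x * (max (f x) 0 + max (- g x) 0)) \<le> norm (\<bar>Y j x * f x\<bar> + \<bar>Y j x * g x\<bar>)"
    proof (rule AE_I2)
      fix x
      have "\<bar>Y j x * (max (f x) 0 + max (- g x) 0)\<bar> = \<bar>Y j x\<bar> * (max (f x) 0 + max (- g x) 0)"
        by (simp add: abs_mult)
      also have "\<dots> \<le> \<bar>Y j x\<bar> * (\<bar>f x\<bar> + \<bar>g x\<bar>)"
        by (intro mult_left_mono) auto
      also have "\<dots> = \<bar>Y j x * f x\<bar> + \<bar>Y j x * g x\<bar>" by (simp add: abs_mult distrib_left)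
      finally show "norm (Y j x * (max (f x) 0 + max (- g x) 0)) \<le> norm (\<bar>Y j x * f x\<bar> + \<bar>Y j x * g x\<bar>)"
        by simp
    qed
  qed
  have iYu: "integrable Pr (\<lambda>\<omega>. Y j \<omega> * ?u \<omega>)" by (rule bound_int[OF iYY iYe]) auto
  have iYv: "integrable Pr (\<lambda>\<omega>. Y j \<omega> * ?v \<omega>)" by (rule bound_int[OF iYe iYY]) auto
  have diff_eq: "(\<integral>\<omega>. f \<omega> * ?u \<omega> \<partial>Pr) - (\<integral>\<omega>. f \<omega> * ?v \<omega> \<partial>Pr)
      = (\<integral>\<omega>. f \<omega> * Y i \<omega> \<partial>Pr) - (\<integral>\<omega>. f \<omega> * ?e \<omega> \<partial>Pr)"
    if "integrable Pr (\<lambda>\<omega>. f \<omega> * ?u \<omega>)" "integrable Pr (\<lambda>\<omega>. f \<omega> * ?v \<omega>)"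
       "integrable Pr (\<lambda>\<omega>. f \<omega> * Y i \<omega>)" "integrable Pr (\<lambda>\<omega>. f \<omega> * ?e \<omega>)" for f
  proof -
    have "(\<integral>\<omega>. f \<omega> * ?u \<omega> \<partial>Pr) - (\<integral>\<omega>. f \<omega> * ?v \<omega> \<partial>Pr) = (\<integral>\<omega>. f \<omega> * ?u \<omega> - f \<omega> * ?v \<omega> \<partial>Pr)"
      using that by simp
    also have "\<dots> = (\<integral>\<omega>. f \<omega> * Y i \<omega> - f \<omega> * ?e \<omega> \<partial>Pr)"
      by (rule Bochner_Integration.integral_cong[OF refl])
         (metis right_diff_distrib uv)
    also have "\<dots> = (\<integral>\<omega>. f \<omega> * Y i \<omega> \<partial>Pr) - (\<integral>\<omega>. f \<omega> * ?e \<omega> \<partial>Pr)"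
      using that by simp
    finally show ?thesis .
  qed
  have main: "(\<integral>\<omega>. Y j \<omega> * ?u \<omega> \<partial>Pr) = (\<integral>\<omega>. Y j \<omega> * ?v \<omega> \<partial>Pr)"
  proof (rule indicator_to_id)
    show "AE x in Pr. 0 \<le> ?u x" by auto
    show "AE x in Pr. 0 \<le> ?v x" by auto
    fix B :: "real set" assume B[measurable]: "B \<in> sets borel"
    let ?hB = "\<lambda>\<omega>. indicator B (Y j \<omega>) :: real"
    have bi: "integrable Pr (\<lambda>\<omega>. ?hB \<omega> * f \<omega>)" if "integrable Pr f" "f \<in> borel_measurable Pr" for f
    proof (rule Bochner_Integration.integrable_bound[OF that(1)])
      show "(\<lambda>\<omega>. ?hB \<omega> * f \<omega>) \<in> borel_measurable Pr" using that by measurable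
      show "AE x in Pr. norm (?hB x * f x) \<le> norm (f x)" by (auto simp: indicator_def)
    qed
    have "(\<integral>\<omega>. ?hB \<omega> * ?u \<omega> \<partial>Pr) - (\<integral>\<omega>. ?hB \<omega> * ?v \<omega> \<partial>Pr)
        = (\<integral>\<omega>. ?hB \<omega> * Y i \<omega> \<partial>Pr) - (\<integral>\<omega>. ?hB \<omega> * ?e \<omega> \<partial>Pr)"
      by (rule diff_eq) (auto intro!: bi iu iv iYi ie)
    also have "\<dots> = 0" using step_B[OF i j ij B] by simp
    finally show "(\<integral>\<omega>. ?hB \<omega> * ?u \<omega> \<partial>Pr) = (\<integral>\<omega>. ?hB \<omega> * ?v \<omega> \<partial>Pr)" by simp
  qed (use iu iv iYu iYv in auto)
  have "(\<integral>\<omega>. Y j \<omega> * Y i \<omega> \<partial>Pr) - (\<integral>\<omega>. Y j \<omega> * ?e \<omega> \<partial>Pr) = 0"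
    using diff_eq[OF iYu iYv iYY iYe] main by simp
  then have s6: "(\<integral>\<omega>. Y i \<omega> * Y j \<omega> \<partial>Pr) = (\<integral>\<omega>. ?e \<omega> * Y j \<omega> \<partial>Pr)"
    by (simp add: mult.commute)
  have s7: "(\<integral>\<omega>. ?e \<omega> * real_cond_exp Pr F (Y j) \<omega> \<partial>Pr) = (\<integral>\<omega>. ?e \<omega> * Y j \<omega> \<partial>Pr)"
    by (rule sigma_finite_subalgebra.real_cond_exp_intg(2)[OF sfs])
       (use iYe eta_F[OF i] in \<open>auto simp: mult.commute\<close>)
  have s7': "(\<integral>\<omega>. ?e \<omega> * real_cond_exp Pr F (Y j) \<omega> \<partial>Pr) = (\<integral>\<omega>. ?e \<omega> * cp_rate M r \<theta> j \<omega> \<partial>Pr)"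
    by (rule integral_cong_AE) (use Y_cond_mean[OF j] eta_rv[OF j] in auto)
  show ?thesis using s6 s7 s7' by simp
qed

end


lemma cov_eq:
  assumes P: "prob_space P" and iX: "integrable P X" and iZ: "integrable P Z"
    and iXZ: "integrable P (\<lambda>\<omega>. X \<omega> * Z \<omega>)"
  shows "cov P X Z = (\<integral>\<omega>. X \<omega> * Z \<omega> \<partial>P) - (\<integral>\<omega>. X \<omega> \<partial>P) * (\<integral>\<omega>. Z \<omega> \<partial>P)"
proof -
  interpret prob_space P by fact
  define a where "a = (\<integral>\<omega>. X \<omega> \<partial>P)"
  define b where "b = (\<integral>\<omega>. Z \<omega> \<partial>P)"
  have "cov P X Z = (\<integral>\<omega>. (X \<omega> * Z \<omega> - b * X \<omega>) - (a * Z \<omega> - a * b) \<partial>P)"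
    unfolding cov_def a_def[symmetric] b_def[symmetric]
    by (rule Bochner_Integration.integral_cong[OF refl]) (simp add: algebra_simps)
  also have "\<dots> = ((\<integral>\<omega>. X \<omega> * Z \<omega> \<partial>P) - b * a) - (a * b - a * b)"
    using iX iZ iXZ by (simp add: a_def b_def prob_space)
  finally show ?thesis by (simp add: a_def b_def)
qed

lemma prod_one_out:
  fixes f :: "nat \<Rightarrow> real"
  assumes "p < M"
  shows "(\<Prod>k<M. f k) = f p * (\<Prod>k\<in>{..<M} - {p}. f k)"
  using prod.remove[of "{..<M}" p f] assms by simp

lemma prod_two_out:
  fixes f :: "nat \<Rightarrow> real"
  assumes "p < M" "q < M" "p \<noteq> q"
  shows "(\<Prod>k<M. f k) = f p * f q * (\<Prod>k\<in>{..<M} - {p, q}. f k)"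
proof -
  have "(\<Prod>k<M. f k) = f p * (\<Prod>k\<in>{..<M} - {p}. f k)" by (rule prod_one_out) fact
  also have "(\<Prod>k\<in>{..<M} - {p}. f k) = f q * (\<Prod>k\<in>{..<M} - {p} - {q}. f k)"
    using prod.remove[of "{..<M} - {p}" q f] assms by simp
  also have "{..<M} - {p} - {q} = {..<M} - {p, q}" by auto
  finally show ?thesis by simp
qed

context cpm begin

definition cval :: "nat set \<Rightarrow> real" where
  "cval S = real r * ((\<Prod>k<M. if k \<in> S then (\<sigma> k)\<^sup>2 + (\<mu> k)\<^sup>2 else (\<mu> k)\<^sup>2) - (\<Prod>k<M. (\<mu> k)\<^sup>2))"

lemma C_val:
  assumes N2: "\<And>k. k < M \<Longrightarrow> N k \<ge> 2"
    and S: "S \<subseteq> {..<M}" "S \<noteq> {}" and k0: "k0 < M" "k0 \<notin> S"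
  shows "cp_C Pr M N Y S = cval S"
proof -
  define i0 where "i0 = (\<lambda>k\<in>{..<M}. 0::nat)"
  define j0 where "j0 = (\<lambda>k\<in>{..<M}. if k \<in> S then 0 else 1::nat)"
  have "i0 \<in> cp_index M N" using N2 by (fastforce simp: cp_index_def i0_def)
  moreover have "j0 \<in> cp_index M N" using N2 by (fastforce simp: cp_index_def j0_def)
  moreover have "agree_pattern M S i0 j0" by (auto simp: agree_pattern_def i0_def j0_def)
  ultimately have ex: "\<exists>ij. fst ij \<in> cp_index M N \<and> snd ij \<in> cp_index M N \<and> agree_pattern M S (fst ij) (snd ij)"
    by (intro exI[of _ "(i0, j0)"]) auto
  define ij where "ij = (SOME ij. fst ij \<in> cp_index M N \<and> snd ij \<in> cp_index M N \<and> agree_pattern M S (fst ij) (snd ij))"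
  define i where "i = fst ij"
  define j where "j = snd ij"
  have ij_prop: "i \<in> cp_index M N" "j \<in> cp_index M N" "agree_pattern M S i j"
    using someI_ex[OF ex] unfolding ij_def[symmetric] i_def j_def by auto
  have Cdef: "cp_C Pr M N Y S = cov Pr (Y i) (Y j)"
    using S(2) by (simp add: cp_C_def ij_def[symmetric] i_def j_def Let_def)
  have neq: "i \<noteq> j" using ij_prop(3) k0 by (auto simp: agree_pattern_def)
  have pat: "\<And>k. k < M \<Longrightarrow> (i k = j k) = (k \<in> S)" using ij_prop(3) by (auto simp: agree_pattern_def)
  have iYY: "integrable Pr (\<lambda>\<omega>. Y i \<omega> * Y j \<omega>)"
    by (rule L2_mult_integrable) (use Y_L2 Y_rv ij_prop in auto)
  have e1: "cov Pr (Y i) (Y j) = expectation (\<lambda>\<omega>. Y i \<omega> * Y j \<omega>) - expectation (Y i) * expectation (Y j)"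
    by (rule cov_eq[OF prob_space_axioms Y_int Y_int iYY]) (use ij_prop in auto)
  have e2: "expectation (\<lambda>\<omega>. Y i \<omega> * Y j \<omega>) - expectation (Y i) * expectation (Y j)
     = expectation (\<lambda>\<omega>. cp_rate M r \<theta> i \<omega> * cp_rate M r \<theta> j \<omega>)
        - expectation (cp_rate M r \<theta> i) * expectation (cp_rate M r \<theta> j)"
    using EYY[OF ij_prop(1,2) neq] EY ij_prop by simp
  have e3: "expectation (\<lambda>\<omega>. cp_rate M r \<theta> i \<omega> * cp_rate M r \<theta> j \<omega>)
        - expectation (cp_rate M r \<theta> i) * expectation (cp_rate M r \<theta> j)
     = real r * (real r * (\<Prod>k<M. (\<mu> k)\<^sup>2)
             + (\<Prod>k<M. if i k = j k then (\<sigma> k)\<^sup>2 + (\<mu> k)\<^sup>2 else (\<mu> k)\<^sup>2) - (\<Prod>k<M. (\<mu> k)\<^sup>2))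
        - (real r * (\<Prod>k<M. \<mu> k)) * (real r * (\<Prod>k<M. \<mu> k))"
    using eta_prod(2)[of i j] eta_mean(2) idx ij_prop by simp
  have e4: "(\<Prod>k<M. if i k = j k then (\<sigma> k)\<^sup>2 + (\<mu> k)\<^sup>2 else (\<mu> k)\<^sup>2)
      = (\<Prod>k<M. if k \<in> S then (\<sigma> k)\<^sup>2 + (\<mu> k)\<^sup>2 else (\<mu> k)\<^sup>2)"
    by (intro prod.cong refl) (simp add: pat)
  have e5: "(real r * (\<Prod>k<M. \<mu> k)) * (real r * (\<Prod>k<M. \<mu> k)) = real r * real r * (\<Prod>k<M. (\<mu> k)\<^sup>2)"
    by (simp add: power2_eq_square prod.distrib)
  show ?thesis unfolding Cdef cval_def e1 e2 e3 e4 e5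
    by (simp add: algebra_simps)
qed

end

theorem mainTheorem4:
  fixes Pr :: "'a measure"
    and M r :: nat and N :: "nat \<Rightarrow> nat"
    and \<theta> :: "nat \<Rightarrow> nat \<Rightarrow> nat \<Rightarrow> 'a \<Rightarrow> real"
    and \<mu> \<sigma> :: "nat \<Rightarrow> real"
    and \<phi> :: "real \<Rightarrow> real"
    and Y :: "(nat \<Rightarrow> nat) \<Rightarrow> 'a \<Rightarrow> real"
  assumes P: "prob_space Pr"
    and M_pos: "M \<ge> 1"
    and N_ge2: "\<And>k. k < M \<Longrightarrow> N k \<ge> 2"
    and theta_rv: "\<And>k i s. k < M \<Longrightarrow> i < N k \<Longrightarrow> s < r \<Longrightarrow> \<theta> k i s \<in> borel_measurable Pr"
    and theta_indep: "prob_space.indep_vars Pr (\<lambda>_. borel) (\<lambda>(k, i, s). \<theta> k i s)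
                        {(k, i, s). k < M \<and> i < N k \<and> s < r}"
    and theta_ident: "\<And>k i s i' s'. k < M \<Longrightarrow> i < N k \<Longrightarrow> s < r \<Longrightarrow> i' < N k \<Longrightarrow> s' < r \<Longrightarrow>
                        distr Pr borel (\<theta> k i s) = distr Pr borel (\<theta> k i' s')"
    and theta_L2: "\<And>k i s. k < M \<Longrightarrow> i < N k \<Longrightarrow> s < r \<Longrightarrow> integrable Pr (\<lambda>\<omega>. (\<theta> k i s \<omega>)\<^sup>2)"
    and theta_mean: "\<And>k i s. k < M \<Longrightarrow> i < N k \<Longrightarrow> s < r \<Longrightarrow> prob_space.expectation Pr (\<theta> k i s) = \<mu> k"
    and theta_var: "\<And>k i s. k < M \<Longrightarrow> i < N k \<Longrightarrow> s < r \<Longrightarrow> prob_space.variance Pr (\<theta> k i s) = (\<sigma> k)\<^sup>2"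
    and Y_rv: "\<And>i. i \<in> cp_index M N \<Longrightarrow> Y i \<in> borel_measurable Pr"
    and Y_L2: "\<And>i. i \<in> cp_index M N \<Longrightarrow> integrable Pr (\<lambda>\<omega>. (Y i \<omega>)\<^sup>2)"
    and phi_pos: "\<And>x. \<phi> x > 0"
    and Y_cond_indep: "cond_indep_family Pr (cp_eta_sigma Pr M N r \<theta>) Y (cp_index M N)"
    and Y_cond_mean: "\<And>i. i \<in> cp_index M N \<Longrightarrow>
          AE \<omega> in Pr. real_cond_exp Pr (cp_eta_sigma Pr M N r \<theta>) (Y i) \<omega> = cp_rate M r \<theta> i \<omega>"
    and Y_cond_var: "\<And>i. i \<in> cp_index M N \<Longrightarrow>
          AE \<omega> in Pr. real_cond_exp Pr (cp_eta_sigma Pr M N r \<theta>)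
                          (\<lambda>\<omega>. (Y i \<omega> - cp_rate M r \<theta> i \<omega>)\<^sup>2) \<omega> = \<phi> (cp_rate M r \<theta> i \<omega>)"
  shows "(\<forall>i\<in>cp_index M N. (prob_space.expectation Pr (Y i))\<^sup>2 = (real r)\<^sup>2 * (\<Prod>k<M. (\<mu> k)\<^sup>2))
       \<and> (M \<ge> 2 \<longrightarrow> (\<forall>p<M. cp_v Pr M N Y {p} = real r * (\<sigma> p)\<^sup>2 * (\<Prod>k\<in>{..<M} - {p}. (\<mu> k)\<^sup>2)))
       \<and> (M \<ge> 3 \<longrightarrow> (\<forall>p<M. \<forall>q<M. p \<noteq> q \<longrightarrow>
            cp_v Pr M N Y {p, q} = real r * (\<sigma> p)\<^sup>2 * (\<sigma> q)\<^sup>2 * (\<Prod>k\<in>{..<M} - {p, q}. (\<mu> k)\<^sup>2)))"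
proof -
  interpret cpm Pr M r N \<theta> \<mu> \<sigma> Y
    by (intro cpm.intro cpth.intro cpth_axioms.intro cpm_axioms.intro) (fact assms)+
  have C0: "cp_C Pr M N Y {} = 0" by (simp add: cp_C_def)
  have part1: "\<forall>i\<in>cp_index M N. (expectation (Y i))\<^sup>2 = (real r)\<^sup>2 * (\<Prod>k<M. (\<mu> k)\<^sup>2)"
  proof
    fix i assume i: "i \<in> cp_index M N"
    have "expectation (Y i) = real r * (\<Prod>k<M. \<mu> k)"
      using EY[OF i] eta_mean(2) idx[OF i] by simp
    then show "(expectation (Y i))\<^sup>2 = (real r)\<^sup>2 * (\<Prod>k<M. (\<mu> k)\<^sup>2)"
      by (simp add: power_mult_distrib prod_power_distrib)
  qed
  have part2: "\<forall>p<M. cp_v Pr M N Y {p} = real r * (\<sigma> p)\<^sup>2 * (\<Prod>k\<in>{..<M} - {p}. (\<mu> k)\<^sup>2)"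
    if M2: "M \<ge> 2"
  proof (intro allI impI)
    fix p assume p: "p < M"
    define k0 where "k0 = (if p = 0 then 1 else 0::nat)"
    have k0: "k0 < M" "k0 \<notin> {p}" using M2 p by (auto simp: k0_def)
    have Cp: "cp_C Pr M N Y {p} = cval {p}" by (rule C_val[OF N_ge2 _ _ k0]) (use p in auto)
    have Pw: "Pow {p} = {{}, {p}}" by blast
    have "cp_v Pr M N Y {p} = cval {p}" by (simp add: cp_v_def Pw C0 Cp)
    also have "\<dots> = real r * (\<sigma> p)\<^sup>2 * (\<Prod>k\<in>{..<M} - {p}. (\<mu> k)\<^sup>2)"
    proof -
      have a: "(\<Prod>k<M. if k \<in> {p} then (\<sigma> k)\<^sup>2 + (\<mu> k)\<^sup>2 else (\<mu> k)\<^sup>2)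
          = ((\<sigma> p)\<^sup>2 + (\<mu> p)\<^sup>2) * (\<Prod>k\<in>{..<M} - {p}. (\<mu> k)\<^sup>2)"
        by (subst prod_one_out[OF p]) (auto intro!: prod.cong)
      have b: "(\<Prod>k<M. (\<mu> k)\<^sup>2) = (\<mu> p)\<^sup>2 * (\<Prod>k\<in>{..<M} - {p}. (\<mu> k)\<^sup>2)"
        by (rule prod_one_out[OF p])
      show ?thesis unfolding cval_def a b by (simp add: algebra_simps)
    qed
    finally show "cp_v Pr M N Y {p} = real r * (\<sigma> p)\<^sup>2 * (\<Prod>k\<in>{..<M} - {p}. (\<mu> k)\<^sup>2)" .
  qed
  have part3: "\<forall>p<M. \<forall>q<M. p \<noteq> q \<longrightarrow>
            cp_v Pr M N Y {p, q} = real r * (\<sigma> p)\<^sup>2 * (\<sigma> q)\<^sup>2 * (\<Prod>k\<in>{..<M} - {p, q}. (\<mu> k)\<^sup>2)"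
    if M3: "M \<ge> 3"
  proof (intro allI impI)
    fix p q assume p: "p < M" and q: "q < M" and pq: "p \<noteq> q"
    define k0 where "k0 = (if 0 \<notin> {p,q} then 0 else if 1 \<notin> {p, q} then 1 else 2::nat)"
    have k0: "k0 < M" "k0 \<notin> {p,q}" using M3 pq by (auto simp: k0_def)
    have Cp: "cp_C Pr M N Y {p} = cval {p}" by (rule C_val[OF N_ge2 _ _ k0(1)]) (use p k0 in auto)
    have Cq: "cp_C Pr M N Y {q} = cval {q}" by (rule C_val[OF N_ge2 _ _ k0(1)]) (use q k0 in auto)
    have Cpq: "cp_C Pr M N Y {p,q} = cval {p,q}" by (rule C_val[OF N_ge2 _ _ k0(1)]) (use p q k0 in auto)
    have Pw: "Pow {p,q} = {{}, {p}, {q}, {p,q}}" by blast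
    have d: "{} \<notin> {{p}, {q}, {p, q}}" "{p} \<notin> {{q}, {p, q}}" "{q} \<notin> {{p, q}}"
      using pq by auto
    have cards: "card {p, q} = 2" using pq by simp
    have "cp_v Pr M N Y {p, q} = cval {p, q} - cval {p} - cval {q}"
      unfolding cp_v_def Pw using d cards by (simp add: C0 Cp Cq Cpq)
    also have "\<dots> = real r * (\<sigma> p)\<^sup>2 * (\<sigma> q)\<^sup>2 * (\<Prod>k\<in>{..<M} - {p, q}. (\<mu> k)\<^sup>2)"
    proof -
      let ?R = "\<Prod>k\<in>{..<M} - {p, q}. (\<mu> k)\<^sup>2"
      have gen: "(\<Prod>k<M. if k \<in> S then (\<sigma> k)\<^sup>2 + (\<mu> k)\<^sup>2 else (\<mu> k)\<^sup>2)
          = (if p \<in> S then (\<sigma> p)\<^sup>2 + (\<mu> p)\<^sup>2 else (\<mu> p)\<^sup>2)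
            * (if q \<in> S then (\<sigma> q)\<^sup>2 + (\<mu> q)\<^sup>2 else (\<mu> q)\<^sup>2) * ?R"
        if "S \<subseteq> {p, q}" for S
      proof -
        have rr: "(\<Prod>k\<in>{..<M} - {p, q}. if k \<in> S then (\<sigma> k)\<^sup>2 + (\<mu> k)\<^sup>2 else (\<mu> k)\<^sup>2) = ?R"
          by (rule prod.cong[OF refl]) (use that in auto)
        show ?thesis by (subst prod_two_out[OF p q pq]) (simp only: rr)
      qed
      have b: "(\<Prod>k<M. (\<mu> k)\<^sup>2) = (\<mu> p)\<^sup>2 * (\<mu> q)\<^sup>2 * ?R"
        by (rule prod_two_out[OF p q pq])
      show ?thesis unfolding cval_def b
        using gen[of "{p}"] gen[of "{q}"] gen[of "{p,q}"] pq by (simp add: algebra_simps)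
    qed
    finally show "cp_v Pr M N Y {p, q} = real r * (\<sigma> p)\<^sup>2 * (\<sigma> q)\<^sup>2 * (\<Prod>k\<in>{..<M} - {p, q}. (\<mu> k)\<^sup>2)" .
  qed
  show ?thesis using part1 part2 part3 by blast
qed

end
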